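(* Let $G$ be a finite group of nilpotence class $n\leq 2$, and let $S$ be a commutative semiring without non-zero zero-divisors and without zero sums. Then the group semiring $SG$ is centrally essential.
   Context: A semiring is a set $S$ with two binary operations $+$ and $\cdot$ such that $(S,+)$ is a commutative monoid with neutral element $0$, $(S,\cdot)$ is a monoid with identity $1$, multiplication distributes over addition on both sides, and $0s=s0=0$ for all $s\in S$. $S$ has no zero sums if $a+b=0$ implies $a=b=0$. The group semiring $SG$ consists of formal sums $\sum_{g\in G} s_g g$ with $s_g\in S$, with componentwise addition and multiplication $(\sum s_g g)(\sum t_h h)=\sum_{k}\big(\sum_{gh=k} s_g t_h\big)k$. The center of a semiring $R$ is $C(R)=\{r: rr'=r'r\ \forall r'\in R\}$; $R$ is centrally essential if for every non-zero $x\in R$ there exist non-zero $y,z\in C(R)$ with $xy=z$. The upper central series of $G$ is $\{e\}=C_0(G)\subseteq C_1(G)\subseteq\cdots$ where $C_i(G)/C_{i-1}(G)$ is the center of $G/C_{i-1}(G)$; the nilpotence class of $G$ is the least positive integer $n$ with $C_n(G)=G$. *)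

theory Defs
  imports "HOL-Algebra.Algebra"
begin

definition group_center :: "('g, 'b) monoid_scheme \<Rightarrow> 'g set" where
  "group_center G = {z \<in> carrier G. \<forall>g \<in> carrier G. z \<otimes>\<^bsub>G\<^esub> g = g \<otimes>\<^bsub>G\<^esub> z}"

fun upper_central :: "('g, 'b) monoid_scheme \<Rightarrow> nat \<Rightarrow> 'g set" where
  "upper_central G 0 = {\<one>\<^bsub>G\<^esub>}"
| "upper_central G (Suc i) =
     {g \<in> carrier G. upper_central G i #>\<^bsub>G\<^esub> g \<in> group_center (G Mod upper_central G i)}"

definition nilpotent_grp :: "('g, 'b) monoid_scheme \<Rightarrow> bool" where
  "nilpotent_grp G = (\<exists>n. 0 < n \<and> upper_central G n = carrier G)"

text \<open>Nilpotence class (meaningful for nilpotent groups): least positive n with C_n(G) = G.\<close>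
definition nilpotence_class :: "('g, 'b) monoid_scheme \<Rightarrow> nat" where
  "nilpotence_class G = (LEAST n. 0 < n \<and> upper_central G n = carrier G)"

text \<open>Elements of SG: functions from the group to S, vanishing outside the carrier
  (for finite G every such function is a finite formal sum).\<close>
definition gsr_carrier :: "('g, 'b) monoid_scheme \<Rightarrow> ('g \<Rightarrow> 's::comm_semiring_1) set" where
  "gsr_carrier G = {x. \<forall>g. g \<notin> carrier G \<longrightarrow> x g = 0}"

definition gsr_mult :: "('g, 'b) monoid_scheme \<Rightarrow> ('g \<Rightarrow> 's::comm_semiring_1) \<Rightarrow> ('g \<Rightarrow> 's) \<Rightarrow> ('g \<Rightarrow> 's)" where
  "gsr_mult G x y = (\<lambda>k. if k \<in> carrier G then
      (\<Sum>(g, h) \<in> {(g, h). g \<in> carrier G \<and> h \<in> carrier G \<and> g \<otimes>\<^bsub>G\<^esub> h = k}. x g * y h)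
    else 0)"

definition gsr_center :: "('g, 'b) monoid_scheme \<Rightarrow> ('g \<Rightarrow> 's::comm_semiring_1) set" where
  "gsr_center G = {r \<in> gsr_carrier G. \<forall>r' \<in> gsr_carrier G. gsr_mult G r r' = gsr_mult G r' r}"

definition gsr_centrally_essential :: "('g, 'b) monoid_scheme \<Rightarrow> ('g \<Rightarrow> 's::comm_semiring_1) itself \<Rightarrow> bool" where
  "gsr_centrally_essential G _ = (\<forall>x \<in> (gsr_carrier G :: ('g \<Rightarrow> 's) set). x \<noteq> (\<lambda>_. 0) \<longrightarrow>
     (\<exists>y \<in> gsr_center G. \<exists>z \<in> gsr_center G. y \<noteq> (\<lambda>_. 0) \<and> z \<noteq> (\<lambda>_. 0) \<and> gsr_mult G x y = z))"

end

theory Submission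
  imports Defs
begin

definition uconst :: "('g, 'b) monoid_scheme \<Rightarrow> 's::comm_semiring_1 \<Rightarrow> 'g \<Rightarrow> 's" where
  "uconst G c = (\<lambda>k. if k \<in> carrier G then c else 0)"

lemma set_left:
  assumes "group G" "k \<in> carrier G"
  shows "{(g, h). g \<in> carrier G \<and> h \<in> carrier G \<and> g \<otimes>\<^bsub>G\<^esub> h = k}
       = (\<lambda>g. (g, inv\<^bsub>G\<^esub> g \<otimes>\<^bsub>G\<^esub> k)) ` carrier G"
proof -
  interpret group G by fact
  show ?thesis
  proof (intro equalityI subsetI)
    fix p assume "p \<in> {(g, h). g \<in> carrier G \<and> h \<in> carrier G \<and> g \<otimes>\<^bsub>G\<^esub> h = k}"
    then obtain g h where p: "p = (g, h)" "g \<in> carrier G" "h \<in> carrier G" "g \<otimes>\<^bsub>G\<^esub> h = k" by blast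
    then have "h = inv\<^bsub>G\<^esub> g \<otimes>\<^bsub>G\<^esub> k" using inv_solve_left[of h g k] assms(2) by simp
    then show "p \<in> (\<lambda>g. (g, inv\<^bsub>G\<^esub> g \<otimes>\<^bsub>G\<^esub> k)) ` carrier G" using p by blast
  next
    fix p assume "p \<in> (\<lambda>g. (g, inv\<^bsub>G\<^esub> g \<otimes>\<^bsub>G\<^esub> k)) ` carrier G"
    then obtain g where "g \<in> carrier G" "p = (g, inv\<^bsub>G\<^esub> g \<otimes>\<^bsub>G\<^esub> k)" by blast
    then show "p \<in> {(g, h). g \<in> carrier G \<and> h \<in> carrier G \<and> g \<otimes>\<^bsub>G\<^esub> h = k}"
      using assms(2) by (simp add: m_assoc[symmetric])
  qed
qed

lemma set_right:
  assumes "group G" "k \<in> carrier G"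
  shows "{(g, h). g \<in> carrier G \<and> h \<in> carrier G \<and> g \<otimes>\<^bsub>G\<^esub> h = k}
       = (\<lambda>h. (k \<otimes>\<^bsub>G\<^esub> inv\<^bsub>G\<^esub> h, h)) ` carrier G"
proof -
  interpret group G by fact
  show ?thesis
  proof (intro equalityI subsetI)
    fix p assume "p \<in> {(g, h). g \<in> carrier G \<and> h \<in> carrier G \<and> g \<otimes>\<^bsub>G\<^esub> h = k}"
    then obtain g h where p: "p = (g, h)" "g \<in> carrier G" "h \<in> carrier G" "g \<otimes>\<^bsub>G\<^esub> h = k" by blast
    then have "g = k \<otimes>\<^bsub>G\<^esub> inv\<^bsub>G\<^esub> h" using inv_solve_right[of g k h] assms(2) by simp
    then show "p \<in> (\<lambda>h. (k \<otimes>\<^bsub>G\<^esub> inv\<^bsub>G\<^esub> h, h)) ` carrier G" using p by blast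
  next
    fix p assume "p \<in> (\<lambda>h. (k \<otimes>\<^bsub>G\<^esub> inv\<^bsub>G\<^esub> h, h)) ` carrier G"
    then obtain h where "h \<in> carrier G" "p = (k \<otimes>\<^bsub>G\<^esub> inv\<^bsub>G\<^esub> h, h)" by blast
    then show "p \<in> {(g, h). g \<in> carrier G \<and> h \<in> carrier G \<and> g \<otimes>\<^bsub>G\<^esub> h = k}"
      using assms(2) by (simp add: m_assoc)
  qed
qed

lemma mult_uconst_right:
  assumes "group G"
  shows "gsr_mult G r (uconst G c) = uconst G ((\<Sum>g\<in>carrier G. r g) * c)"
proof
  fix k
  show "gsr_mult G r (uconst G c) k = uconst G ((\<Sum>g\<in>carrier G. r g) * c) k"
  proof (cases "k \<in> carrier G")
    case True
    interpret group G by fact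
    have inj: "inj_on (\<lambda>g. (g, inv\<^bsub>G\<^esub> g \<otimes>\<^bsub>G\<^esub> k)) (carrier G)" by (rule inj_onI) simp
    have "gsr_mult G r (uconst G c) k = (\<Sum>(g, h) \<in> (\<lambda>g. (g, inv\<^bsub>G\<^esub> g \<otimes>\<^bsub>G\<^esub> k)) ` carrier G. r g * uconst G c h)"
      using True set_left[OF assms True] by (simp add: gsr_mult_def)
    also have "\<dots> = (\<Sum>g\<in>carrier G. r g * c)"
      using True by (simp add: sum.reindex[OF inj] uconst_def)
    also have "\<dots> = (\<Sum>g\<in>carrier G. r g) * c" by (simp add: sum_distrib_right)
    finally show ?thesis using True by (simp add: uconst_def)
  next
    case False
    then show ?thesis by (simp add: gsr_mult_def uconst_def)
  qed
qed

lemma mult_uconst_left: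
  assumes "group G"
  shows "gsr_mult G (uconst G c) r = uconst G ((\<Sum>g\<in>carrier G. r g) * c)"
proof
  fix k
  show "gsr_mult G (uconst G c) r k = uconst G ((\<Sum>g\<in>carrier G. r g) * c) k"
  proof (cases "k \<in> carrier G")
    case True
    interpret group G by fact
    have inj: "inj_on (\<lambda>h. (k \<otimes>\<^bsub>G\<^esub> inv\<^bsub>G\<^esub> h, h)) (carrier G)" by (rule inj_onI) simp
    have "gsr_mult G (uconst G c) r k = (\<Sum>(g, h) \<in> (\<lambda>h. (k \<otimes>\<^bsub>G\<^esub> inv\<^bsub>G\<^esub> h, h)) ` carrier G. uconst G c g * r h)"
      using True set_right[OF assms True] by (simp add: gsr_mult_def)
    also have "\<dots> = (\<Sum>h\<in>carrier G. c * r h)"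
      using True by (simp add: sum.reindex[OF inj] uconst_def)
    also have "\<dots> = (\<Sum>g\<in>carrier G. r g) * c" by (simp add: sum_distrib_left mult.commute)
    finally show ?thesis using True by (simp add: uconst_def)
  next
    case False
    then show ?thesis by (simp add: gsr_mult_def uconst_def)
  qed
qed

lemma uconst_center:
  assumes "group G"
  shows "uconst G c \<in> gsr_center G"
proof -
  have "uconst G c \<in> gsr_carrier G" by (simp add: gsr_carrier_def uconst_def)
  moreover have "\<forall>r' \<in> gsr_carrier G. gsr_mult G (uconst G c) r' = gsr_mult G r' (uconst G c)"
    by (simp only: mult_uconst_left[OF assms] mult_uconst_right[OF assms]) simp
  ultimately show ?thesis unfolding gsr_center_def by blast
qed

lemma uconst_nonzero:
  assumes "group G" "c \<noteq> 0"
  shows "uconst G c \<noteq> (\<lambda>_. 0)"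
proof
  assume "uconst G c = (\<lambda>_. 0)"
  then have "uconst G c \<one>\<^bsub>G\<^esub> = 0" by simp
  then show False using assms monoid.one_closed[OF group.is_monoid[OF assms(1)]] by (simp add: uconst_def)
qed

lemma sum_zero_nozs:
  fixes f :: "'a \<Rightarrow> 's::comm_semiring_1"
  assumes nz: "\<And>a b :: 's. a + b = 0 \<Longrightarrow> a = 0 \<and> b = 0"
    and "finite A" "sum f A = 0" "x \<in> A"
  shows "f x = 0"
proof -
  have "sum f A = 0 \<longrightarrow> (\<forall>y\<in>A. f y = 0)"
    using assms(2)
  proof (induction A rule: finite_induct)
    case empty then show ?case by simp
  next
    case (insert a A)
    show ?case
    proof
      assume "sum f (insert a A) = 0"
      then have "f a + sum f A = 0" using insert.hyps by simp
      then have "f a = 0" "sum f A = 0" using nz by blast+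
      then show "\<forall>y\<in>insert a A. f y = 0" using insert.IH by auto
    qed
  qed
  then show ?thesis using assms(3,4) by blast
qed

theorem proposition3p1:
  fixes G :: "('g, 'b) monoid_scheme"
  assumes "group G" and "finite (carrier G)"
    and "nilpotent_grp G" and "nilpotence_class G \<le> 2"
    and "\<And>a b :: 's::{comm_semiring_1, semiring_no_zero_divisors}. a + b = 0 \<Longrightarrow> a = 0 \<and> b = 0"
  shows "gsr_centrally_essential G TYPE('g \<Rightarrow> 's)"
  unfolding gsr_centrally_essential_def
proof (intro ballI impI)
  fix x :: "'g \<Rightarrow> 's"
  assume xc: "x \<in> gsr_carrier G" and xn: "x \<noteq> (\<lambda>_. 0)"
  obtain g where g: "x g \<noteq> 0" using xn by auto
  then have gC: "g \<in> carrier G" using xc by (auto simp: gsr_carrier_def)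
  have s: "(\<Sum>g\<in>carrier G. x g) \<noteq> 0"
  proof
    assume "(\<Sum>g\<in>carrier G. x g) = 0"
    then show False using sum_zero_nozs[where f=x, OF assms(5) assms(2) _ gC] g by simp
  qed
  show "\<exists>y\<in>gsr_center G. \<exists>z\<in>gsr_center G. y \<noteq> (\<lambda>_. 0) \<and> z \<noteq> (\<lambda>_. 0) \<and> gsr_mult G x y = z"
  proof (rule bexI[where x="uconst G 1"], rule bexI[where x="uconst G (\<Sum>g\<in>carrier G. x g)"], intro conjI)
    show "uconst G (1::'s) \<in> gsr_center G" by (rule uconst_center[OF assms(1)])
    show "uconst G (\<Sum>g\<in>carrier G. x g) \<in> gsr_center G" by (rule uconst_center[OF assms(1)])
    show "uconst G (1::'s) \<noteq> (\<lambda>_. 0)" by (rule uconst_nonzero[OF assms(1)]) simp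
    show "uconst G (\<Sum>g\<in>carrier G. x g) \<noteq> (\<lambda>_. 0)" by (rule uconst_nonzero[OF assms(1) s])
    show "gsr_mult G x (uconst G 1) = uconst G (\<Sum>g\<in>carrier G. x g)"
      by (simp add: mult_uconst_right[OF assms(1)])
  qed
qed

end
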